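(* Let $\hat{\mathsf A}$ be a $\chi\times\chi$ matrix with entries in $\mathcal A$, and let $A_0=\langle\hat 1,\hat{\mathsf A}\rangle$ be the complex matrix of its identity components. If every eigenvalue of the transfer matrix $T_A$ lies strictly inside the unit disk, then every eigenvalue of $A_0$ lies strictly inside the unit disk.
   Context: $\mathcal A$ is the algebra of operators on $\mathbb C^q$ with inner product $\langle\hat A,\hat B\rangle=\mathrm{Tr}[\hat A^\dagger\hat B]/\mathrm{Tr}[\hat 1]$ and an orthonormal basis $\{\hat O_\alpha\}$ with $\hat O_0=\hat 1$. Writing $\hat{\mathsf A}=\sum_\alpha\hat O_\alpha A_\alpha$ with $(A_\alpha)_{ab}=\langle\hat O_\alpha,\hat{\mathsf A}_{ab}\rangle$ (so $A_0=\langle\hat 1,\hat{\mathsf A}\rangle$ entrywise), the transfer matrix is $T_A=\sum_\alpha\overline{A_\alpha}\otimes A_\alpha$. *)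

theory Defs
  imports Complex_Main "Jordan_Normal_Form.Matrix" "Jordan_Normal_Form.Char_Poly"
begin

(* Operators on C^q are represented as q x q complex matrices (complex mat in carrier_mat q q). *)

(* Normalized Hilbert-Schmidt inner product <A,B> = Tr[A^dagger B] / Tr[1] on q x q matrices *)
definition hs_inner :: "nat \<Rightarrow> complex mat \<Rightarrow> complex mat \<Rightarrow> complex" where
  "hs_inner q A B = (\<Sum>i<q. \<Sum>j<q. cnj (A $$ (i, j)) * B $$ (i, j)) / of_nat q"

definition orthonormal_operator_basis :: "nat \<Rightarrow> (nat \<Rightarrow> complex mat) \<Rightarrow> bool" where
  "orthonormal_operator_basis q Ob \<longleftrightarrow>
     (\<forall>\<alpha><q^2. Ob \<alpha> \<in> carrier_mat q q) \<and>
     (\<forall>\<alpha><q^2. \<forall>\<beta><q^2. hs_inner q (Ob \<alpha>) (Ob \<beta>) = (if \<alpha> = \<beta> then 1 else 0)) \<and>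
     Ob 0 = 1\<^sub>m q"

definition component_mat :: "nat \<Rightarrow> nat \<Rightarrow> (nat \<Rightarrow> complex mat) \<Rightarrow> (nat \<Rightarrow> nat \<Rightarrow> complex mat) \<Rightarrow> nat \<Rightarrow> complex mat" where
  "component_mat q \<chi> Ob AA \<alpha> = mat \<chi> \<chi> (\<lambda>(a, b). hs_inner q (Ob \<alpha>) (AA a b))"

definition conj_mat :: "complex mat \<Rightarrow> complex mat" where
  "conj_mat A = map_mat cnj A"

definition kron :: "'a :: times mat \<Rightarrow> 'a mat \<Rightarrow> 'a mat" where
  "kron A B = mat (dim_row A * dim_row B) (dim_col A * dim_col B)
     (\<lambda>(i, j). A $$ (i div dim_row B, j div dim_col B) * B $$ (i mod dim_row B, j mod dim_col B))"

(* transfer matrix T_A = sum_alpha conj(A_alpha) (x) A_alpha, a chi^2 x chi^2 matrix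
   (the matrix sum is written entrywise) *)
definition transfer_mat :: "nat \<Rightarrow> nat \<Rightarrow> (nat \<Rightarrow> complex mat) \<Rightarrow> (nat \<Rightarrow> nat \<Rightarrow> complex mat) \<Rightarrow> complex mat" where
  "transfer_mat q \<chi> Ob AA = mat (\<chi> * \<chi>) (\<chi> * \<chi>)
     (\<lambda>ij. \<Sum>\<alpha><q^2. kron (conj_mat (component_mat q \<chi> Ob AA \<alpha>)) (component_mat q \<chi> Ob AA \<alpha>) $$ ij)"

end

theory Submission
  imports Defs "Jordan_Normal_Form.Spectral_Radius"
begin

definition qf :: "nat \<Rightarrow> (nat \<Rightarrow> complex) \<Rightarrow> (nat \<Rightarrow> nat \<Rightarrow> complex) \<Rightarrow> complex" where
  "qf n u Y = (\<Sum>a<n. \<Sum>b<n. u a * Y a b * cnj (u b))"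

definition psd :: "nat \<Rightarrow> (nat \<Rightarrow> nat \<Rightarrow> complex) \<Rightarrow> bool" where
  "psd n Y = (\<forall>u. Im (qf n u Y) = 0 \<and> Re (qf n u Y) \<ge> 0)"

definition sw :: "nat \<Rightarrow> (nat \<Rightarrow> nat \<Rightarrow> complex) \<Rightarrow> (nat \<Rightarrow> nat \<Rightarrow> complex) \<Rightarrow> nat \<Rightarrow> nat \<Rightarrow> complex" where
  "sw n B Y = (\<lambda>a b. \<Sum>c<n. \<Sum>d<n. cnj (B a c) * Y c d * B b d)"

lemma qf_sw: "qf n u (sw n B Y) = qf n (\<lambda>c. \<Sum>a<n. u a * cnj (B a c)) Y"
proof -
  have "qf n u (sw n B Y) = (\<Sum>a<n. \<Sum>b<n. \<Sum>c<n. \<Sum>d<n. u a * cnj (B a c) * Y c d * (B b d * cnj (u b)))"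
    unfolding qf_def sw_def by (simp add: sum_distrib_left sum_distrib_right mult_ac)
  also have "\<dots> = (\<Sum>a<n. \<Sum>c<n. \<Sum>b<n. \<Sum>d<n. u a * cnj (B a c) * Y c d * (B b d * cnj (u b)))"
    by (rule sum.cong[OF refl], rule sum.swap)
  also have "\<dots> = (\<Sum>c<n. \<Sum>a<n. \<Sum>b<n. \<Sum>d<n. u a * cnj (B a c) * Y c d * (B b d * cnj (u b)))"
    by (rule sum.swap)
  also have "\<dots> = (\<Sum>c<n. \<Sum>a<n. \<Sum>d<n. \<Sum>b<n. u a * cnj (B a c) * Y c d * (B b d * cnj (u b)))"
    by (rule sum.cong[OF refl], rule sum.cong[OF refl], rule sum.swap)
  also have "\<dots> = (\<Sum>c<n. \<Sum>d<n. \<Sum>a<n. \<Sum>b<n. u a * cnj (B a c) * Y c d * (B b d * cnj (u b)))"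
    by (rule sum.cong[OF refl], rule sum.swap)
  also have "\<dots> = qf n (\<lambda>c. \<Sum>a<n. u a * cnj (B a c)) Y"
    unfolding qf_def by (simp add: sum_distrib_left sum_distrib_right mult_ac)
  finally show ?thesis .
qed

lemma psd_sw: "psd n Y \<Longrightarrow> psd n (sw n B Y)"
  unfolding psd_def qf_sw by blast

lemma qf_add: "qf n u (\<lambda>a b. Y a b + Z a b) = qf n u Y + qf n u Z"
  unfolding qf_def by (simp add: distrib_left distrib_right sum.distrib)

lemma qf_scale: "qf n u (\<lambda>a b. c * Y a b) = c * qf n u Y"
  unfolding qf_def by (simp add: sum_distrib_left mult_ac)

lemma qf_sum: "qf n u (\<lambda>a b. \<Sum>i\<in>I. Y i a b) = (\<Sum>i\<in>I. qf n u (Y i))"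
  unfolding qf_def by (simp add: sum_distrib_left sum_distrib_right sum.swap[of _ I] mult_ac)

lemma psd_add: "psd n Y \<Longrightarrow> psd n Z \<Longrightarrow> psd n (\<lambda>a b. Y a b + Z a b)"
  unfolding psd_def qf_add by auto

lemma psd_scale: "psd n Y \<Longrightarrow> r \<ge> 0 \<Longrightarrow> psd n (\<lambda>a b. complex_of_real r * Y a b)"
  unfolding psd_def qf_scale by auto

lemma psd_sum: "(\<And>i. i \<in> I \<Longrightarrow> psd n (Y i)) \<Longrightarrow> psd n (\<lambda>a b. \<Sum>i\<in>I. Y i a b)"
  unfolding psd_def qf_sum by (auto simp: Im_sum Re_sum intro: sum_nonneg)

lemma sum_pair: "(\<Sum>j<n*m. g j) = (\<Sum>c<n. \<Sum>d<m. g (c*m+d :: nat))"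
proof (induction n)
  case 0 then show ?case by simp
next
  case (Suc n)
  have "{..<Suc n * m} = {..<n*m} \<union> {n*m..<n*m+m}" by auto
  then have "(\<Sum>j<Suc n*m. g j) = (\<Sum>j<n*m. g j) + (\<Sum>j\<in>{n*m..<n*m+m}. g j)"
    by (simp add: sum.union_disjoint ivl_disj_int)
  also have "(\<Sum>j\<in>{n*m..<n*m+m}. g j) = (\<Sum>d<m. g (n*m+d))"
    using sum.shift_bounds_nat_ivl[of g 0 "n*m" m] by (simp add: lessThan_atLeast0 add.commute)
  finally show ?case using Suc by simp
qed


lemma T_vec:
  fixes q \<chi> :: nat and Ob and AA
  defines "M \<equiv> \<lambda>\<alpha> a b. component_mat q \<chi> Ob AA \<alpha> $$ (a, b)"
  shows "transfer_mat q \<chi> Ob AA *\<^sub>v vec (\<chi>*\<chi>) (\<lambda>i. Y (i div \<chi>) (i mod \<chi>))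
     = vec (\<chi>*\<chi>) (\<lambda>i. (\<Sum>\<alpha><q^2. sw \<chi> (M \<alpha>) Y (i div \<chi>) (i mod \<chi>)))"
proof (rule eq_vecI)
  fix i assume "i < dim_vec (vec (\<chi>*\<chi>) (\<lambda>i. (\<Sum>\<alpha><q^2. sw \<chi> (M \<alpha>) Y (i div \<chi>) (i mod \<chi>))))"
  then have i: "i < \<chi>*\<chi>" by simp
  then have "\<chi> > 0" by (cases \<chi>) auto
  have id: "i div \<chi> < \<chi>" "i mod \<chi> < \<chi>" using i \<open>\<chi> > 0\<close> by (auto simp: less_mult_imp_div_less)
  have "(transfer_mat q \<chi> Ob AA *\<^sub>v vec (\<chi>*\<chi>) (\<lambda>i. Y (i div \<chi>) (i mod \<chi>))) $ i
      = (\<Sum>j<\<chi>*\<chi>. (\<Sum>\<alpha><q^2. cnj (M \<alpha> (i div \<chi>) (j div \<chi>)) * M \<alpha> (i mod \<chi>) (j mod \<chi>)) * Y (j div \<chi>) (j mod \<chi>))"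
    using i id unfolding transfer_mat_def
    apply (simp add: scalar_prod_def lessThan_atLeast0)
    apply (rule sum.cong[OF refl])
    apply (simp add: kron_def conj_mat_def component_mat_def M_def less_mult_imp_div_less)
    done
  also have "\<dots> = (\<Sum>c<\<chi>. \<Sum>d<\<chi>. (\<Sum>\<alpha><q^2. cnj (M \<alpha> (i div \<chi>) c) * M \<alpha> (i mod \<chi>) d) * Y c d)"
    by (simp add: sum_pair)
  also have "\<dots> = (\<Sum>\<alpha><q^2. sw \<chi> (M \<alpha>) Y (i div \<chi>) (i mod \<chi>))"
    unfolding sw_def by (simp add: sum_distrib_right sum_distrib_left mult_ac sum.swap[of _ "{..<q^2}"])
  finally show "(transfer_mat q \<chi> Ob AA *\<^sub>v vec (\<chi>*\<chi>) (\<lambda>i. Y (i div \<chi>) (i mod \<chi>))) $ i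
     = vec (\<chi>*\<chi>) (\<lambda>i. (\<Sum>\<alpha><q^2. sw \<chi> (M \<alpha>) Y (i div \<chi>) (i mod \<chi>))) $ i"
    using i by simp
qed (simp add: transfer_mat_def)


lemma sw_lin: "sw n B (\<lambda>a b. Y a b - c * Z a b) a b = sw n B Y a b - c * sw n B Z a b"
  unfolding sw_def by (simp add: algebra_simps sum_subtractf sum_distrib_left)

lemma qf_cong: "(\<And>a b. a < n \<Longrightarrow> b < n \<Longrightarrow> Y a b = Z a b) \<Longrightarrow> qf n u Y = qf n u Z"
  unfolding qf_def by (intro sum.cong refl) auto

lemma psd_cong: "psd n Y \<Longrightarrow> (\<And>a b. a < n \<Longrightarrow> b < n \<Longrightarrow> Y a b = Z a b) \<Longrightarrow> psd n Z"
  unfolding psd_def using qf_cong[of n Y Z] by simp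

lemma qf_rank1: "qf n u (\<lambda>a b. cnj (w a) * w b) = (\<Sum>a<n. u a * cnj (w a)) * cnj (\<Sum>a<n. u a * cnj (w a))"
  unfolding qf_def cnj_sum sum_product by (simp add: mult_ac)

lemma psd_rank1: "psd n (\<lambda>a b. cnj (w a) * w b)"
  unfolding psd_def qf_rank1
proof
  fix u
  have "(\<Sum>a<n. u a * cnj (w a)) * cnj (\<Sum>a<n. u a * cnj (w a)) = complex_of_real (cmod (\<Sum>a<n. u a * cnj (w a)) ^ 2)"
    by (rule complex_norm_square[symmetric])
  then show "Im ((\<Sum>a<n. u a * cnj (w a)) * cnj (\<Sum>a<n. u a * cnj (w a))) = 0 \<and>
    0 \<le> Re ((\<Sum>a<n. u a * cnj (w a)) * cnj (\<Sum>a<n. u a * cnj (w a)))"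
    by simp
qed

lemma smult_mv: "A \<in> carrier_mat n n \<Longrightarrow> v \<in> carrier_vec n \<Longrightarrow> (c \<cdot>\<^sub>m A) *\<^sub>v v = c \<cdot>\<^sub>v (A *\<^sub>v v)"
  by (intro eq_vecI) (auto simp: scalar_prod_def sum_distrib_left mult.assoc)


theorem lemma2:
  fixes q \<chi> :: nat
    and Ob :: "nat \<Rightarrow> complex mat"
    and AA :: "nat \<Rightarrow> nat \<Rightarrow> complex mat"
  assumes "q > 0"
    and "orthonormal_operator_basis q Ob"
    and "\<forall>a<\<chi>. \<forall>b<\<chi>. AA a b \<in> carrier_mat q q"
    and "\<forall>z. eigenvalue (transfer_mat q \<chi> Ob AA) z \<longrightarrow> cmod z < 1"
  shows "\<forall>z. eigenvalue (component_mat q \<chi> Ob AA 0) z \<longrightarrow> cmod z < 1"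
proof (intro allI impI)
  fix z assume evz: "eigenvalue (component_mat q \<chi> Ob AA 0) z"
  show "cmod z < 1"
  proof (rule ccontr)
    assume "\<not> cmod z < 1"
    then have z1: "cmod z \<ge> 1" by simp
    define A0 where "A0 = component_mat q \<chi> Ob AA 0"
    have A0c: "A0 \<in> carrier_mat \<chi> \<chi>" unfolding A0_def component_mat_def by simp
    from evz obtain w where wc: "w \<in> carrier_vec \<chi>" and wnz: "w \<noteq> 0\<^sub>v \<chi>" and wev: "A0 *\<^sub>v w = z \<cdot>\<^sub>v w"
      unfolding eigenvalue_def eigenvector_def A0_def[symmetric] using A0c by auto
    define n where "n = \<chi> * \<chi>"
    define T where "T = transfer_mat q \<chi> Ob AA"
    have Tc: "T \<in> carrier_mat n n" unfolding T_def transfer_mat_def n_def by simp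
    obtain a0 where a0: "a0 < \<chi>" "w $ a0 \<noteq> 0"
      using wnz wc by (metis carrier_vecD eq_vecI index_zero_vec(1,2))
    have chi0: "\<chi> > 0" using a0 by simp
    have n0: "n > 0" unfolding n_def using chi0 by simp
    define r where "r = spectral_radius T"
    have r1: "r < 1"
      using spectral_radius_mem_max(1)[OF Tc n0] assms(4) unfolding r_def spectrum_def T_def by auto
    have r0: "r \<ge> 0"
      using spectral_radius_mem_max(1)[OF Tc n0] unfolding r_def by auto
    define s where "s = (1 + r) / 2"
    have s0: "s > 0" and s1: "s < 1" and rs: "r < s" using r0 r1 unfolding s_def by auto
    define T' where "T' = complex_of_real (1/s) \<cdot>\<^sub>m T"
    have T'c: "T' \<in> carrier_mat n n" unfolding T'_def using Tc by simp
    have evT': "cmod \<mu> < 1" if "eigenvalue T' \<mu>" for \<mu>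
    proof -
      from that obtain v where vc: "v \<in> carrier_vec n" and vnz: "v \<noteq> 0\<^sub>v n" and vev: "T' *\<^sub>v v = \<mu> \<cdot>\<^sub>v v"
        unfolding eigenvalue_def eigenvector_def using T'c by auto
      have "T *\<^sub>v v = complex_of_real s \<cdot>\<^sub>v (T' *\<^sub>v v)"
        unfolding T'_def smult_mv[OF Tc vc] using s0 by (auto simp: smult_smult_assoc)
      also have "\<dots> = (complex_of_real s * \<mu>) \<cdot>\<^sub>v v" unfolding vev by (simp add: smult_smult_assoc)
      finally have "eigenvalue T (complex_of_real s * \<mu>)"
        unfolding eigenvalue_def eigenvector_def using vc vnz Tc by auto
      then have "cmod (complex_of_real s * \<mu>) \<le> r"
        using spectral_radius_mem_max(2)[OF Tc n0] unfolding r_def spectrum_def by auto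
      then have "s * cmod \<mu> \<le> r" using s0 by (simp add: norm_mult)
      then have "s * cmod \<mu> < s * 1" using rs by simp
      then show ?thesis using s0 by (simp only: mult_less_cancel_left_pos)
    qed
    have "spectral_radius T' < 1"
      using spectral_radius_mem_max(1)[OF T'c n0] evT' unfolding spectrum_def by auto
    from spectral_radius_jnf_norm_bound_less_1_upper_triangular[OF T'c this]
    obtain c where cb: "\<And>k. norm_bound (T' ^\<^sub>m k) c" by auto
    define M where "M = (\<lambda>\<alpha> a b. component_mat q \<chi> Ob AA \<alpha> $$ (a, b))"
    define \<Phi> where "\<Phi> = (\<lambda>Y a b. complex_of_real (1/s) * (\<Sum>\<alpha><q^2. sw \<chi> (M \<alpha>) Y a b))"
    define vY where "vY = (\<lambda>Y :: nat \<Rightarrow> nat \<Rightarrow> complex. vec n (\<lambda>i. Y (i div \<chi>) (i mod \<chi>)))"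
    have vYc: "vY Y \<in> carrier_vec n" for Y unfolding vY_def by simp
    have Tvec: "T' *\<^sub>v vY Y = vY (\<Phi> Y)" for Y
    proof -
      have "T' *\<^sub>v vY Y = complex_of_real (1/s) \<cdot>\<^sub>v (T *\<^sub>v vY Y)"
        unfolding T'_def by (rule smult_mv[OF Tc vYc])
      also have "T *\<^sub>v vY Y = vec n (\<lambda>i. (\<Sum>\<alpha><q^2. sw \<chi> (M \<alpha>) Y (i div \<chi>) (i mod \<chi>)))"
        unfolding T_def vY_def n_def M_def by (rule T_vec)
      finally show ?thesis unfolding vY_def \<Phi>_def by auto
    qed
    have powvec: "T' ^\<^sub>m k *\<^sub>v vY Y = vY ((\<Phi> ^^ k) Y)" for k Y
    proof (induction k arbitrary: Y)
      case 0
      then show ?case using vYc[of Y] T'c by simp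
    next
      case (Suc k)
      have "T' ^\<^sub>m Suc k *\<^sub>v vY Y = T' ^\<^sub>m k *\<^sub>v (T' *\<^sub>v vY Y)"
        using assoc_mult_mat_vec[OF pow_carrier_mat[OF T'c] T'c vYc] by simp
      also have "\<dots> = vY ((\<Phi> ^^ k) (\<Phi> Y))" unfolding Tvec Suc ..
      finally show ?case by (simp only: funpow_Suc_right o_apply)
    qed
    define X where "X = (\<lambda>a b. cnj (w $ a) * w $ b)"
    define \<rho> where "\<rho> = cmod z ^ 2 / s"
    have Aw: "(\<Sum>c<\<chi>. M 0 a c * w $ c) = z * w $ a" if "a < \<chi>" for a
    proof -
      have "(A0 *\<^sub>v w) $ a = (z \<cdot>\<^sub>v w) $ a" using wev by simp
      then show ?thesis using that A0c wc
        by (simp add: M_def A0_def scalar_prod_def lessThan_atLeast0 row_def)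
    qed
    have swM0: "sw \<chi> (M 0) X a b = complex_of_real (cmod z ^ 2) * X a b" if "a < \<chi>" "b < \<chi>" for a b
    proof -
      have "sw \<chi> (M 0) X a b = cnj (\<Sum>c<\<chi>. M 0 a c * w $ c) * (\<Sum>d<\<chi>. M 0 b d * w $ d)"
        unfolding sw_def X_def cnj_sum sum_product by (simp add: mult_ac)
      also have "\<dots> = cnj z * z * X a b" unfolding Aw[OF that(1)] Aw[OF that(2)] X_def by (simp add: mult_ac)
      also have "cnj z * z = complex_of_real (cmod z ^ 2)" by (metis complex_norm_square mult.commute)
      finally show ?thesis .
    qed
    have psdX: "psd \<chi> X" unfolding X_def by (rule psd_rank1)
    have psd\<Phi>: "psd \<chi> (\<Phi> Y)" if "psd \<chi> Y" for Y
      unfolding \<Phi>_def using s0 by (intro psd_scale psd_sum psd_sw that) auto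
    have \<Phi>lin: "\<Phi> (\<lambda>a b. Y a b - c * Z a b) a b = \<Phi> Y a b - c * \<Phi> Z a b" for Y Z c a b
      unfolding \<Phi>_def sw_lin by (simp add: sum_subtractf sum_distrib_left algebra_simps)
    have q2: "0 \<in> {..<q^2}" using assms(1) by simp
    have psdE: "psd \<chi> (\<lambda>a b. \<Phi> X a b - complex_of_real \<rho> * X a b)"
    proof (rule psd_cong)
      show "psd \<chi> (\<lambda>a b. complex_of_real (1/s) * (\<Sum>\<alpha>\<in>{..<q^2} - {0}. sw \<chi> (M \<alpha>) X a b))"
        using s0 by (intro psd_scale psd_sum psd_sw psdX) auto
      fix a b assume ab: "a < \<chi>" "b < \<chi>"
      have "\<Phi> X a b = complex_of_real (1/s) * (sw \<chi> (M 0) X a b + (\<Sum>\<alpha>\<in>{..<q^2} - {0}. sw \<chi> (M \<alpha>) X a b))"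
        unfolding \<Phi>_def by (simp add: sum.remove[OF _ q2])
      then show "complex_of_real (1/s) * (\<Sum>\<alpha>\<in>{..<q^2} - {0}. sw \<chi> (M \<alpha>) X a b) = \<Phi> X a b - complex_of_real \<rho> * X a b"
        unfolding swM0[OF ab] \<rho>_def by (simp add: algebra_simps)
    qed
    have \<rho>0: "\<rho> \<ge> 0" unfolding \<rho>_def using s0 by simp
    have psdD: "psd \<chi> (\<lambda>a b. (\<Phi> ^^ k) X a b - complex_of_real (\<rho> ^ k) * X a b)" for k
    proof (induction k)
      case 0
      have "psd \<chi> (\<lambda>a b. 0)" by (simp add: psd_def qf_def)
      then show ?case by (rule psd_cong) simp
    next
      case (Suc k)
      define D where "D = (\<lambda>a b. (\<Phi> ^^ k) X a b - complex_of_real (\<rho> ^ k) * X a b)"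
      have "psd \<chi> (\<lambda>a b. \<Phi> D a b + complex_of_real (\<rho> ^ k) * (\<Phi> X a b - complex_of_real \<rho> * X a b))"
        using Suc \<rho>0 unfolding D_def by (intro psd_add psd\<Phi> psd_scale psdE) auto
      then show ?case
      proof (rule psd_cong)
        fix a b
        show "\<Phi> D a b + complex_of_real (\<rho> ^ k) * (\<Phi> X a b - complex_of_real \<rho> * X a b) =
          (\<Phi> ^^ Suc k) X a b - complex_of_real (\<rho> ^ Suc k) * X a b"
          unfolding D_def \<Phi>lin by (simp add: algebra_simps)
      qed
    qed
    define u where "u = (\<lambda>a. w $ a)"
    define S where "S = (\<Sum>a<\<chi>. u a * cnj (u a))"
    define R where "R = (\<Sum>a<\<chi>. cmod (u a) ^ 2)"
    have SR: "S = complex_of_real R" unfolding S_def R_def of_real_sum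
      by (rule sum.cong[OF refl]) (metis complex_norm_square)
    have "cmod (u a0) ^ 2 \<le> R" unfolding R_def
      by (rule member_le_sum) (use a0 in auto)
    moreover have "cmod (u a0) ^ 2 > 0" using a0 unfolding u_def by simp
    ultimately have R0: "R > 0" by linarith
    define N where "N = R ^ 2"
    have N0: "N > 0" unfolding N_def using R0 by simp
    have qX: "qf \<chi> u X = complex_of_real N"
      unfolding X_def qf_rank1 u_def[symmetric] S_def[symmetric] SR N_def by (simp add: power2_eq_square)
    define vX where "vX = vY X"
    define K where "K = (\<Sum>a<\<chi>. \<Sum>b<\<chi>. cmod (u a) * (c * (\<Sum>j<n. cmod (vX $ j))) * cmod (u b))"
    have upper: "Re (qf \<chi> u ((\<Phi> ^^ k) X)) \<le> K" for k
    proof -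
      have ent: "cmod ((\<Phi> ^^ k) X a b) \<le> c * (\<Sum>j<n. cmod (vX $ j))" if ab: "a < \<chi>" "b < \<chi>" for a b
      proof -
        define i where "i = a * \<chi> + b"
        have "a * \<chi> + b < (a + 1) * \<chi>" using ab by simp
        also have "(a + 1) * \<chi> \<le> \<chi> * \<chi>" using ab by (intro mult_right_mono) auto
        finally have i: "i < n" unfolding i_def n_def .
        have idm: "i div \<chi> = a" "i mod \<chi> = b" unfolding i_def using ab by auto
        have "(\<Phi> ^^ k) X a b = vY ((\<Phi> ^^ k) X) $ i" unfolding vY_def using i idm by simp
        also have "\<dots> = (T' ^\<^sub>m k *\<^sub>v vX) $ i" unfolding vX_def powvec ..
        also have "\<dots> = (\<Sum>j<n. (T' ^\<^sub>m k) $$ (i, j) * vX $ j)"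
          using i T'c unfolding vX_def vY_def by (simp add: scalar_prod_def lessThan_atLeast0 row_def)
        finally have "cmod ((\<Phi> ^^ k) X a b) = cmod (\<Sum>j<n. (T' ^\<^sub>m k) $$ (i, j) * vX $ j)" by simp
        also have "\<dots> \<le> (\<Sum>j<n. cmod ((T' ^\<^sub>m k) $$ (i, j) * vX $ j))" by (rule norm_sum)
        also have "\<dots> \<le> (\<Sum>j<n. c * cmod (vX $ j))"
        proof (rule sum_mono)
          fix j assume "j \<in> {..<n}"
          then have "cmod ((T' ^\<^sub>m k) $$ (i, j)) \<le> c"
            using cb[of k] i T'c unfolding norm_bound_def by auto
          then show "cmod ((T' ^\<^sub>m k) $$ (i, j) * vX $ j) \<le> c * cmod (vX $ j)"
            unfolding norm_mult by (rule mult_right_mono) simp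
        qed
        finally show ?thesis by (simp add: sum_distrib_left)
      qed
      have "Re (qf \<chi> u ((\<Phi> ^^ k) X)) \<le> cmod (qf \<chi> u ((\<Phi> ^^ k) X))" by (rule complex_Re_le_cmod)
      also have "\<dots> \<le> (\<Sum>a<\<chi>. cmod (\<Sum>b<\<chi>. u a * (\<Phi> ^^ k) X a b * cnj (u b)))"
        unfolding qf_def by (rule norm_sum)
      also have "\<dots> \<le> (\<Sum>a<\<chi>. \<Sum>b<\<chi>. cmod (u a * (\<Phi> ^^ k) X a b * cnj (u b)))"
        by (intro sum_mono norm_sum)
      also have "\<dots> \<le> K" unfolding K_def
      proof (intro sum_mono)
        fix a b assume "a \<in> {..<\<chi>}" "b \<in> {..<\<chi>}"
        then have "cmod ((\<Phi> ^^ k) X a b) \<le> c * (\<Sum>j<n. cmod (vX $ j))" using ent by auto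
        then show "cmod (u a * (\<Phi> ^^ k) X a b * cnj (u b)) \<le> cmod (u a) * (c * (\<Sum>j<n. cmod (vX $ j))) * cmod (u b)"
          unfolding norm_mult complex_mod_cnj by (intro mult_right_mono mult_left_mono) auto
      qed
      finally show ?thesis .
    qed
    have lower: "(1/s) ^ k * N \<le> Re (qf \<chi> u ((\<Phi> ^^ k) X))" for k
    proof -
      have "qf \<chi> u ((\<Phi> ^^ k) X) = qf \<chi> u (\<lambda>a b. ((\<Phi> ^^ k) X a b - complex_of_real (\<rho> ^ k) * X a b)
           + complex_of_real (\<rho> ^ k) * X a b)" by simp
      also have "\<dots> = qf \<chi> u (\<lambda>a b. (\<Phi> ^^ k) X a b - complex_of_real (\<rho> ^ k) * X a b)
           + complex_of_real (\<rho> ^ k) * complex_of_real N"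
        unfolding qf_add qf_scale qX ..
      finally have "Re (qf \<chi> u ((\<Phi> ^^ k) X)) = Re (qf \<chi> u (\<lambda>a b. (\<Phi> ^^ k) X a b - complex_of_real (\<rho> ^ k) * X a b))
           + \<rho> ^ k * N" by simp
      moreover have "Re (qf \<chi> u (\<lambda>a b. (\<Phi> ^^ k) X a b - complex_of_real (\<rho> ^ k) * X a b)) \<ge> 0"
        using psdD[of k] unfolding psd_def by auto
      moreover have "(1/s) ^ k \<le> \<rho> ^ k"
      proof (rule power_mono)
        have "1 \<le> cmod z ^ 2" using z1 by (simp add: one_le_power)
        then show "1/s \<le> \<rho>" unfolding \<rho>_def using s0 by (simp add: divide_right_mono)
      qed (use s0 in simp)
      moreover have "(1/s) ^ k * N \<le> \<rho> ^ k * N" using N0 \<open>(1/s) ^ k \<le> \<rho> ^ k\<close> by (intro mult_right_mono) auto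
      ultimately show ?thesis by linarith
    qed
    have "1 < 1/s" using s0 s1 by simp
    from real_arch_pow[OF this, of "K / N"] obtain k where "K / N < (1/s) ^ k" by auto
    then have "K < (1/s) ^ k * N" using N0 by (simp add: pos_divide_less_eq)
    then show False using upper[of k] lower[of k] by simp
  qed
qed

end
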